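(* Let $f=h+\overline{g}$ be a sense-preserving locally univalent harmonic mapping in $\mathbb{D}$ with $f\in\mathcal{BT}$ and dilatation $w$ satisfying $\|w\|<1$. Then for all $z_1,z_2\in\mathbb{D}$, $$|f(z_1)-f(z_2)|\le\left(\frac{1+\|w\|}{1-\|w\|}\right)^{1/2}\beta_2(f)\,d_h(z_1,z_2).$$
   Context: $\mathbb{D}$ is the unit disk. A sense-preserving locally univalent harmonic mapping $f:\mathbb{D}\to\mathbb{C}$ is written $f=h+\overline{g}$ with $h,g$ analytic in $\mathbb{D}$, $h'\neq 0$ in $\mathbb{D}$; its dilatation is $w=g'/h'$, analytic with $|w|<1$ in $\mathbb{D}$, and $\|w\|=\sup_{z\in\mathbb{D}}|w(z)|$. For a smooth $F:\mathbb{D}\to\mathbb{C}$, $J_F=|F_z|^2-|F_{\bar z}|^2$ with $\partial_z=\frac12(\partial_x-i\partial_y)$, $\partial_{\bar z}=\frac12(\partial_x+i\partial_y)$ (so $J_f=|h'|^2-|g'|^2$). The Bloch-type class $\mathcal{BT}$ consists of smooth $F:\mathbb{D}\to\mathbb{C}$ with $\beta_2(F):=\sup_{z\in\mathbb{D}}(1-|z|^2)\sqrt{|J_F(z)|}<\infty$. The hyperbolic distance is $d_h(z,\xi)=\frac12\log\frac{1+p(z,\xi)}{1-p(z,\xi)}$ with $p(z,\xi)=\left|\frac{z-\xi}{1-\overline{\xi}z}\right|$. *)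

theory Defs
  imports "HOL-Analysis.Analysis"
begin

definition wirt_z :: "(complex \<Rightarrow> complex) \<Rightarrow> complex \<Rightarrow> complex" where
  "wirt_z F z = (frechet_derivative F (at z) 1 - \<i> * frechet_derivative F (at z) \<i>) / 2"

definition wirt_zbar :: "(complex \<Rightarrow> complex) \<Rightarrow> complex \<Rightarrow> complex" where
  "wirt_zbar F z = (frechet_derivative F (at z) 1 + \<i> * frechet_derivative F (at z) \<i>) / 2"

definition jac :: "(complex \<Rightarrow> complex) \<Rightarrow> complex \<Rightarrow> real" where
  "jac F z = (cmod (wirt_z F z))\<^sup>2 - (cmod (wirt_zbar F z))\<^sup>2"

definition beta2 :: "(complex \<Rightarrow> complex) \<Rightarrow> real" where
  "beta2 F = (SUP z\<in>ball 0 1. (1 - (cmod z)\<^sup>2) * sqrt \<bar>jac F z\<bar>)"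

definition in_BT :: "(complex \<Rightarrow> complex) \<Rightarrow> bool" where
  "in_BT F \<longleftrightarrow> (\<forall>z\<in>ball 0 1. F differentiable (at z))
     \<and> bdd_above ((\<lambda>z. (1 - (cmod z)\<^sup>2) * sqrt \<bar>jac F z\<bar>) ` ball 0 1)"

definition pseudo_hyp :: "complex \<Rightarrow> complex \<Rightarrow> real" where
  "pseudo_hyp z \<xi> = cmod ((z - \<xi>) / (1 - cnj \<xi> * z))"

definition d_h :: "complex \<Rightarrow> complex \<Rightarrow> real" where
  "d_h z \<xi> = (1/2) * ln ((1 + pseudo_hyp z \<xi>) / (1 - pseudo_hyp z \<xi>))"

end

theory Submission imports Defs begin

lemma mob_id: fixes a b :: complex
  shows "(cmod (1 - cnj a * b))^2 - (cmod (b - a))^2 = (1 - (cmod a)^2) * (1 - (cmod b)^2)"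
  unfolding cmod_power2 by (simp add: algebra_simps power2_eq_square)

lemma jac_harm:
  assumes "(h has_field_derivative h') (at z)" "(g has_field_derivative g') (at z)"
  shows "jac (\<lambda>z. h z + cnj (g z)) z = (cmod h')^2 - (cmod g')^2"
proof -
  have "((\<lambda>x. cnj (g x)) has_derivative (\<lambda>v. cnj (g' * v))) (at z)"
    by (rule has_derivative_cnj) (use assms(2) in \<open>simp add: has_field_derivative_def\<close>)
  hence "((\<lambda>z. h z + cnj (g z)) has_derivative (\<lambda>v. h' * v + cnj (g' * v))) (at z)"
    using assms(1) by (auto intro!: has_derivative_add simp: has_field_derivative_def)
  hence fd: "frechet_derivative (\<lambda>z. h z + cnj (g z)) (at z) = (\<lambda>v. h' * v + cnj (g' * v))"
    by (rule frechet_derivative_at[symmetric])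
  have "wirt_z (\<lambda>z. h z + cnj (g z)) z = h'"
    unfolding wirt_z_def fd by (simp add: complex_eq_iff)
  moreover have "wirt_zbar (\<lambda>z. h z + cnj (g z)) z = cnj g'"
    unfolding wirt_zbar_def fd by (simp add: complex_eq_iff)
  ultimately show ?thesis by (simp add: jac_def)
qed

lemma tanh_artanh_real: assumes "\<bar>p::real\<bar> < 1" shows "tanh (artanh p) = p"
proof -
  have e: "exp (- 2 * artanh p) = (1 - p) / (1 + p)"
    using assms by (simp add: artanh_def exp_minus exp_ln_iff divide_pos_pos)
  have "tanh (artanh p) = (1 - (1 - p) / (1 + p)) / (1 + (1 - p) / (1 + p))"
    by (simp only: tanh_real_altdef e)
  also have "\<dots> = p" using assms by (simp add: field_simps)
  finally show ?thesis .
qed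

theorem mainTheorem10:
  fixes h g :: "complex \<Rightarrow> complex" and z1 z2 :: complex
  assumes hol_h: "h holomorphic_on ball 0 1"
    and hol_g: "g holomorphic_on ball 0 1"
    and loc_univ: "\<forall>z\<in>ball 0 1. deriv h z \<noteq> 0"
    and sense_pres: "\<forall>z\<in>ball 0 1. cmod (deriv g z / deriv h z) < 1"
    and BT: "in_BT (\<lambda>z. h z + cnj (g z))"
    and norm_w: "(SUP z\<in>ball 0 1. cmod (deriv g z / deriv h z)) < 1"
    and z1: "z1 \<in> ball 0 1" and z2: "z2 \<in> ball 0 1"
  shows "cmod ((h z1 + cnj (g z1)) - (h z2 + cnj (g z2)))
     \<le> sqrt ((1 + (SUP z\<in>ball 0 1. cmod (deriv g z / deriv h z)))
              / (1 - (SUP z\<in>ball 0 1. cmod (deriv g z / deriv h z))))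
        * beta2 (\<lambda>z. h z + cnj (g z)) * d_h z1 z2"
proof -
  define W where "W = (SUP z\<in>ball 0 1. cmod (deriv g z / deriv h z))"
  define F where "F = (\<lambda>z. h z + cnj (g z))"
  define B where "B = beta2 F"
  define K where "K = sqrt ((1+W)/(1-W)) * B"
  have W1: "W < 1" using norm_w W_def by simp
  have wle: "cmod (deriv g z / deriv h z) \<le> W" if "z \<in> ball 0 1" for z
    unfolding W_def by (rule cSUP_upper) (use sense_pres that in \<open>auto intro!: bdd_aboveI2[where M=1] less_imp_le\<close>)
  have Ble: "(1 - (cmod z)^2) * sqrt \<bar>jac F z\<bar> \<le> B" if "z \<in> ball 0 1" for z
    unfolding B_def beta2_def by (rule cSUP_upper) (use BT that in \<open>simp_all add: in_BT_def F_def\<close>)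
  have hd: "(h has_field_derivative deriv h z) (at z)" if "z \<in> ball 0 1" for z
    using holomorphic_derivI[OF hol_h open_ball that] .
  have gd: "(g has_field_derivative deriv g z) (at z)" if "z \<in> ball 0 1" for z
    using holomorphic_derivI[OF hol_g open_ball that] .
  have key: "(cmod (deriv h z) + cmod (deriv g z)) * (1 - (cmod z)^2) \<le> K" if z: "z \<in> ball 0 1" for z
  proof -
    define H where "H = cmod (deriv h z)"
    define r where "r = cmod (deriv g z / deriv h z)"
    have H0: "H > 0" using loc_univ z by (simp add: H_def)
    have gH: "cmod (deriv g z) = r * H" using H0 by (simp add: r_def H_def norm_divide)
    have r0: "0 \<le> r" "r \<le> W" using wle[OF z] by (auto simp: r_def)
    have z1': "1 - (cmod z)^2 \<ge> 0" using z by (simp add: abs_square_le_1 less_imp_le)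
    have "jac F z = H^2 - (r*H)^2" unfolding F_def using jac_harm[OF hd[OF z] gd[OF z]] gH H_def by simp
    hence "sqrt \<bar>jac F z\<bar> = H * sqrt (1 - r^2)"
    proof -
      assume j: "jac F z = H^2 - (r*H)^2"
      have r1: "r < 1" using r0 W1 by simp
      have "r^2 \<le> 1" using r0 r1 by (simp add: abs_square_le_1)
      hence "H^2 * r^2 \<le> H^2" by (simp add: mult_left_le)
      hence "jac F z \<ge> 0" using j by (simp add: power_mult_distrib algebra_simps)
      hence "\<bar>jac F z\<bar> = H^2 * (1 - r^2)" using j by (simp add: algebra_simps power_mult_distrib)
      thus ?thesis using H0 by (simp add: real_sqrt_mult)
    qed
    have c: "1 + r \<le> sqrt ((1+W)/(1-W)) * sqrt (1 - r^2)"
    proof -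
      have "(1+W)*(1-r^2) - (1+r)^2*(1-W) = 2*(1+r)*(W-r)" by (simp add: algebra_simps power2_eq_square)
      moreover have "2*(1+r)*(W-r) \<ge> 0" using r0 by simp
      ultimately have "(1+r)^2*(1-W) \<le> (1+W)*(1-r^2)" by linarith
      hence "(1+r)^2 \<le> (1+W)/(1-W)*(1-r^2)" using W1 by (simp add: field_simps)
      hence "1 + r \<le> sqrt ((1+W)/(1-W)*(1-r^2))" by (rule real_le_rsqrt)
      thus ?thesis by (simp only: real_sqrt_mult)
    qed
    have "(cmod (deriv h z) + cmod (deriv g z)) * (1 - (cmod z)^2) = H * (1 + r) * (1 - (cmod z)^2)"
      by (simp add: gH H_def algebra_simps)
    also have "\<dots> \<le> H * (sqrt ((1+W)/(1-W)) * sqrt (1 - r^2)) * (1 - (cmod z)^2)"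
      using c H0 z1' by (intro mult_right_mono mult_left_mono) auto
    also have "\<dots> = sqrt ((1+W)/(1-W)) * ((1 - (cmod z)^2) * sqrt \<bar>jac F z\<bar>)"
      using \<open>sqrt \<bar>jac F z\<bar> = H * sqrt (1 - r^2)\<close> by simp
    also have "\<dots> \<le> sqrt ((1+W)/(1-W)) * B" using Ble[OF z] W1 r0 by (intro mult_left_mono) auto
    finally show ?thesis by (simp add: K_def)
  qed
  have z2n: "cmod z2 < 1" using z2 by simp
  have z1n: "cmod z1 < 1" using z1 by simp
  define c where "c = cnj z2"
  have nz: "1 + c * t \<noteq> 0" if "cmod t < 1" for t
  proof
    assume "1 + c * t = 0"
    hence "cmod (c * t) = 1" by (metis add_eq_0_iff norm_minus_cancel norm_one)
    moreover have "cmod (c * t) < 1" using z2n that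
      by (simp add: norm_mult c_def) (metis mult_strict_mono' norm_ge_zero mult_1_right less_le_trans mult_le_one less_imp_le)
    ultimately show False by simp
  qed
  define a where "a = (z1 - z2) / (1 - c * z1)"
  define p where "p = cmod a"
  have den: "1 - c * z1 \<noteq> 0" using nz[of "- z1"] z1n by simp
  have pdef: "p = pseudo_hyp z1 z2" by (simp add: pseudo_hyp_def a_def p_def c_def)
  have p1: "p < 1"
  proof -
    have "(cmod (1 - cnj z2 * z1))^2 - (cmod (z1 - z2))^2 = (1 - (cmod z2)^2) * (1 - (cmod z1)^2)"
      by (rule mob_id)
    moreover have "(1 - (cmod z2)^2) * (1 - (cmod z1)^2) > 0"
      using z1n z2n by (intro mult_pos_pos) (simp_all add: abs_square_less_1)
    ultimately have "(cmod (z1 - z2))^2 < (cmod (1 - c * z1))^2" by (simp add: c_def)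
    hence "cmod (z1 - z2) < cmod (1 - c * z1)" by (simp add: power_less_imp_less_base)
    thus ?thesis using den by (simp add: p_def a_def norm_divide divide_less_eq)
  qed
  have p0: "0 \<le> p" by (simp add: p_def)
  define d where "d = artanh p"
  have dh: "d_h z1 z2 = d" by (simp add: d_h_def d_def artanh_def pdef)
  have d0: "0 \<le> d" unfolding d_def artanh_def using p0 p1 by (simp add: ln_ge_zero_iff divide_pos_pos le_divide_eq)
  define e where "e = sgn a"
  have e1: "cmod e \<le> 1" by (simp add: e_def norm_sgn)
  define \<phi> where "\<phi> = (\<lambda>t. (z2 + t) / (1 + c * t))"
  define T where "T = (\<lambda>u::real. complex_of_real (tanh u) * e)"
  define \<Gamma> where "\<Gamma> = (\<lambda>u. \<phi> (T u))"
  have Tn: "cmod (T u) < 1" for u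
  proof -
    have "cmod (T u) = \<bar>tanh u\<bar> * cmod e" by (simp add: T_def norm_mult)
    also have "\<dots> \<le> \<bar>tanh u\<bar>" using e1 by (simp add: mult_left_le)
    also have "\<dots> < 1" using tanh_real_bounds[of u] by auto
    finally show ?thesis .
  qed
  have phid: "1 - (cmod (\<phi> t))^2 = (1 - (cmod z2)^2) * (1 - (cmod t)^2) / (cmod (1 + c*t))^2"
    if "cmod t < 1" for t
  proof -
    have m: "(cmod (1 + c * t))^2 - (cmod (t + z2))^2 = (1 - (cmod z2)^2) * (1 - (cmod t)^2)"
      using mob_id[of "- z2" t] by (simp add: c_def)
    have "cmod (1 + c*t) \<noteq> 0" using nz[OF that] by simp
    thus ?thesis using m by (simp add: \<phi>_def norm_divide power_divide field_simps add.commute)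
  qed
  have \<Gamma>in: "\<Gamma> u \<in> ball 0 1" for u
  proof -
    have "(1 - (cmod z2)^2) * (1 - (cmod (T u))^2) / (cmod (1 + c*T u))^2 > 0"
      using z2n Tn[of u] nz[OF Tn[of u]] by (intro divide_pos_pos mult_pos_pos) (simp_all add: abs_square_less_1)
    hence "(cmod (\<Gamma> u))^2 < 1" using phid[OF Tn[of u]] by (simp add: \<Gamma>_def)
    thus ?thesis by (simp add: abs_square_less_1)
  qed
  define T' where "T' = (\<lambda>u. complex_of_real (1 - tanh u ^ 2) * e)"
  define \<phi>' where "\<phi>' = (\<lambda>t. (1 - c * z2) / (1 + c * t)^2)"
  have Td: "(T has_vector_derivative T' u) (at u)" for u
  proof -
    have "((\<lambda>u. tanh u) has_real_derivative 1 - tanh u ^ 2) (at u)"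
      by (auto intro!: derivative_eq_intros)
    from has_vector_derivative_mult_left[OF has_vector_derivative_of_real[OF this], of e]
    show ?thesis by (simp add: T_def T'_def)
  qed
  have phd: "(\<phi> has_field_derivative \<phi>' t) (at t)" if "cmod t < 1" for t
    using nz[OF that] unfolding \<phi>_def \<phi>'_def
    by (auto intro!: derivative_eq_intros simp: field_simps power2_eq_square)
  define G' where "G' = (\<lambda>u. T' u * \<phi>' (T u))"
  have Gd: "(\<Gamma> has_vector_derivative G' u) (at u)" for u
    using field_vector_diff_chain_at[OF Td phd[OF Tn]] by (simp add: \<Gamma>_def G'_def o_def)
  define D where "D = (\<lambda>u. G' u * deriv h (\<Gamma> u) + cnj (G' u * deriv g (\<Gamma> u)))"
  have Fd: "((F \<circ> \<Gamma>) has_vector_derivative D u) (at u)" for u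
  proof -
    have 1: "((h \<circ> \<Gamma>) has_vector_derivative G' u * deriv h (\<Gamma> u)) (at u)"
      by (rule field_vector_diff_chain_at[OF Gd hd[OF \<Gamma>in]])
    have 2: "((g \<circ> \<Gamma>) has_vector_derivative G' u * deriv g (\<Gamma> u)) (at u)"
      by (rule field_vector_diff_chain_at[OF Gd gd[OF \<Gamma>in]])
    have "((\<lambda>x. (h \<circ> \<Gamma>) x + cnj ((g \<circ> \<Gamma>) x)) has_vector_derivative D u) (at u)"
      unfolding D_def by (intro has_vector_derivative_add 1 has_vector_derivative_cnj 2)
    thus ?thesis by (simp add: F_def o_def)
  qed
  have Gb: "cmod (G' u) \<le> 1 - (cmod (\<Gamma> u))^2" for u
  proof -
    have cz: "c * z2 = complex_of_real ((cmod z2)^2)" unfolding c_def cmod_power2 by (simp add: complex_eq_iff power2_eq_square)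
    have "1 - c * z2 = complex_of_real (1 - (cmod z2)^2)" by (simp add: cz)
    moreover have "1 - (cmod z2)^2 \<ge> 0" using z2n by (simp add: abs_square_le_1 less_imp_le)
    ultimately have "cmod (1 - c * z2) = 1 - (cmod z2)^2" by (simp only: norm_of_real abs_of_nonneg)
    hence "cmod (\<phi>' (T u)) = (1 - (cmod z2)^2) / (cmod (1 + c * T u))^2"
      by (simp add: \<phi>'_def norm_divide norm_power)
    moreover have "cmod (T' u) \<le> 1 - (cmod (T u))^2"
    proof -
      have t1: "\<bar>tanh u\<bar> < 1" using tanh_real_bounds[of u] by auto
      have "cmod (T' u) = \<bar>1 - (tanh u)^2\<bar> * cmod e"
        by (simp only: T'_def norm_mult norm_of_real)
      moreover have "1 - (tanh u)^2 \<ge> 0" using t1 by (simp add: abs_square_le_1 less_imp_le)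
      ultimately have "cmod (T' u) = (1 - (tanh u)^2) * cmod e" by simp
      moreover have "cmod (T u) = \<bar>tanh u\<bar> * cmod e" by (simp add: T_def norm_mult)
      moreover have "(1 - (tanh u)^2) * cmod e \<le> 1 - (\<bar>tanh u\<bar> * cmod e)^2"
      proof -
        have "1 - (\<bar>tanh u\<bar> * cmod e)^2 - (1 - (tanh u)^2) * cmod e = (1 - cmod e) * (1 + (tanh u)^2 * cmod e)"
          by (simp add: algebra_simps power2_eq_square)
        moreover have "(1 - cmod e) * (1 + (tanh u)^2 * cmod e) \<ge> 0" using e1 by simp
        ultimately show ?thesis by linarith
      qed
      ultimately show ?thesis by simp
    qed
    ultimately have "cmod (G' u) \<le> (1 - (cmod (T u))^2) * ((1 - (cmod z2)^2) / (cmod (1 + c * T u))^2)"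
      unfolding G'_def norm_mult by (metis mult_right_mono norm_ge_zero)
    also have "\<dots> = 1 - (cmod (\<Gamma> u))^2" using phid[OF Tn[of u]] by (simp add: \<Gamma>_def)
    finally show ?thesis .
  qed
  have Db: "cmod (D u) \<le> K" for u
  proof -
    have "cmod (D u) \<le> cmod (G' u) * (cmod (deriv h (\<Gamma> u)) + cmod (deriv g (\<Gamma> u)))"
      unfolding D_def by (metis norm_triangle_ineq complex_mod_cnj norm_mult distrib_left)
    also have "\<dots> \<le> (1 - (cmod (\<Gamma> u))^2) * (cmod (deriv h (\<Gamma> u)) + cmod (deriv g (\<Gamma> u)))"
      using Gb by (intro mult_right_mono) auto
    also have "\<dots> \<le> K" using key[OF \<Gamma>in] by (simp add: mult.commute)
    finally show ?thesis .
  qed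
  have bnd: "cmod ((F \<circ> \<Gamma>) d - (F \<circ> \<Gamma>) 0) \<le> K * norm (d - 0)"
  proof (rule differentiable_bound[where S=UNIV and f'="\<lambda>u v. v *\<^sub>R D u"])
    show "((F \<circ> \<Gamma>) has_derivative (\<lambda>v. v *\<^sub>R D x)) (at x within UNIV)" for x
      using Fd[of x] by (simp add: has_vector_derivative_def)
    show "onorm (\<lambda>v. v *\<^sub>R D x) \<le> K" for x
      using Db[of x] by (simp add: onorm_scaleR_left[OF bounded_linear_ident] onorm_id)
  qed auto
  have G0: "\<Gamma> 0 = z2" by (simp add: \<Gamma>_def \<phi>_def T_def)
  have Gd1: "\<Gamma> d = z1"
  proof -
    have "tanh d = p" unfolding d_def using p0 p1 by (simp add: tanh_artanh_real)
    hence Tdv: "T d = a" by (cases "a = 0") (simp_all add: T_def e_def p_def sgn_div_norm scaleR_conv_of_real)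
    have "1 - c * z2 \<noteq> 0" using nz[of "- z2"] z2n by simp
    note nz2 = this
    have n: "z2 + a = z1 * (1 - c * z2) / (1 - c * z1)"
      using den by (simp add: a_def field_simps)
    have m: "1 + c * a = (1 - c * z2) / (1 - c * z1)"
      using den by (simp add: a_def field_simps)
    show ?thesis using den nz2 by (simp add: \<Gamma>_def Tdv \<phi>_def n m)
  qed
  have "cmod (F z1 - F z2) \<le> K * d" using bnd d0 by (simp add: G0 Gd1)
  thus ?thesis by (simp add: F_def K_def B_def W_def dh)
qed

end
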